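(* Let $R$ be a (unital, not necessarily associative) ring, let $\sigma\colon R\to R$ be an additive surjection with $\sigma(1)=1$, and let $\delta\colon R\to R$ be an additive map with $\delta(1)=0$. Then for every $n\in\mathbb{N}$, in the non-associative Ore extension $R[X;\sigma,\delta]$ one has $\sum_{i=0}^n X^iR=\sum_{i=0}^n RX^i$, as right $R$-modules (in particular as subsets of $R[X;\sigma,\delta]$).
   Context: $\mathbb{N}$ includes $0$. For a non-associative ring $R$ and additive maps $\sigma,\delta\colon R\to R$ with $\sigma(1)=1$, $\delta(1)=0$, the non-associative Ore extension $R[X;\sigma,\delta]$ is the additive group of formal sums $\sum_{i\in\mathbb{N}} r_iX^i$ ($r_i\in R$, finitely many non-zero) with pointwise addition and multiplication the biadditive extension of $(rX^m)(sX^n)=\sum_{i\in\mathbb{N}}(r\pi_i^m(s))X^{i+n}$ for $r,s\in R$, $m,n\in\mathbb{N}$, where $\pi_i^m$ is the sum of all $\binom{m}{i}$ compositions of $i$ copies of $\sigma$ and $m-i$ copies of $\delta$, and $\pi_i^m=0$ if $i>m$. $R$ is identified with $RX^0$; $X^iR$ denotes $\{X^i r: r\in R\}$ and $RX^i=\{rX^i:r\in R\}$, sums of such sets are sets of sums. *)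

theory Defs
  imports Main
begin

text \<open>Elements of the non-associative Ore extension R[X;sigma,delta] are represented
as finitely supported coefficient functions nat => R (p k = coefficient of X^k).
The ring R is a type with additive abelian group structure, a multiplication and a 1;
the (non-associative, unital) ring axioms are explicit hypotheses of the theorem.\<close>

text \<open>pi_i^m: the sum of all compositions of i copies of sigma and m-i copies of delta,
indexed by boolean words of length m with exactly i entries True (True = sigma).
It is 0 automatically when i > m (empty sum).\<close>
definition ore_pi :: "('a::ab_group_add \<Rightarrow> 'a) \<Rightarrow> ('a \<Rightarrow> 'a) \<Rightarrow> nat \<Rightarrow> nat \<Rightarrow> 'a \<Rightarrow> 'a" where
  "ore_pi \<sigma> \<delta> m i = (\<lambda>r. \<Sum>w \<in> {w::bool list. length w = m \<and> count_list w True = i}.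
        foldr (\<lambda>b f. (if b then \<sigma> else \<delta>) \<circ> f) w id r)"

definition finsupp :: "(nat \<Rightarrow> 'a::zero) \<Rightarrow> bool" where
  "finsupp p \<longleftrightarrow> finite {k. p k \<noteq> 0}"

text \<open>Product in R[X;sigma,delta]: biadditive extension of
 (r X^m)(s X^n) = sum_i (r * pi_i^m(s)) X^(i+n).\<close>
definition ore_mult :: "('a::{ab_group_add,times} \<Rightarrow> 'a) \<Rightarrow> ('a \<Rightarrow> 'a) \<Rightarrow>
    (nat \<Rightarrow> 'a) \<Rightarrow> (nat \<Rightarrow> 'a) \<Rightarrow> (nat \<Rightarrow> 'a)" where
  "ore_mult \<sigma> \<delta> p q = (\<lambda>k. \<Sum>m \<in> {m. p m \<noteq> 0}. \<Sum>n \<in> {n. q n \<noteq> 0}.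
       if n \<le> k then p m * ore_pi \<sigma> \<delta> m (k - n) (q n) else 0)"

definition monom :: "'a::zero \<Rightarrow> nat \<Rightarrow> (nat \<Rightarrow> 'a)" where
  "monom r i = (\<lambda>k. if k = i then r else 0)"

definition XpowR :: "('a::{ab_group_add,times,one} \<Rightarrow> 'a) \<Rightarrow> ('a \<Rightarrow> 'a) \<Rightarrow> nat \<Rightarrow> (nat \<Rightarrow> 'a) set" where
  "XpowR \<sigma> \<delta> i = {ore_mult \<sigma> \<delta> (monom 1 i) (monom r 0) | r. True}"

definition RXpow :: "nat \<Rightarrow> (nat \<Rightarrow> 'a::zero) set" where
  "RXpow i = {monom r i | r. True}"

definition set_sum_upto :: "(nat \<Rightarrow> (nat \<Rightarrow> 'a::comm_monoid_add) set) \<Rightarrow> nat \<Rightarrow> (nat \<Rightarrow> 'a) set" where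
  "set_sum_upto A n = {(\<lambda>k. \<Sum>i\<le>n. g i k) | g. \<forall>i\<le>n. g i \<in> A i}"

end

theory Submission
  imports Defs
begin

lemma foldr_zero:
  assumes "(\<sigma>::'a::ab_group_add\<Rightarrow>'a) 0 = 0" "\<delta> 0 = 0"
  shows "foldr (\<lambda>b f. (if b then \<sigma> else \<delta>) \<circ> f) w id 0 = 0"
  using assms by (induction w) auto

lemma pi_zero:
  assumes "(\<sigma>::'a::ab_group_add\<Rightarrow>'a) 0 = 0" "\<delta> 0 = 0"
  shows "ore_pi \<sigma> \<delta> m i 0 = 0"
  unfolding ore_pi_def using foldr_zero[of \<sigma> \<delta>, OF assms] by simp

lemma pi_big:
  assumes "m < i"
  shows "ore_pi \<sigma> \<delta> m i r = 0"
proof -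
  have E: "{w::bool list. length w = m \<and> count_list w True = i} = {}"
    using assms count_le_length[of _ True] by (auto simp: not_le[symmetric])
  show ?thesis by (simp add: ore_pi_def E)
qed

lemma count_full: "count_list w True = length w \<longleftrightarrow> w = replicate (length w) True"
proof (induction w)
  case Nil then show ?case by simp
next
  case (Cons a w) then show ?case using count_le_length[of w True] by auto
qed

lemma count_rep: "count_list (replicate m True) True = m"
  by (induction m) auto

lemma pi_top: "ore_pi \<sigma> \<delta> m m r = (\<sigma> ^^ m) r"
proof -
  have "{w::bool list. length w = m \<and> count_list w True = m} = {replicate m True}"
    using count_full by (auto simp: count_rep)
  moreover have "foldr (\<lambda>b f. (if b then \<sigma> else \<delta>) \<circ> f) (replicate m True) id = \<sigma> ^^ m"
    by (induction m) auto
  ultimately show ?thesis unfolding ore_pi_def by simp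
qed

theorem lemma12:
  fixes \<sigma> \<delta> :: "'a::{ab_group_add,times,one} \<Rightarrow> 'a" and n :: nat
  assumes distl: "\<And>a b c::'a. a * (b + c) = a * b + a * c"
    and distr: "\<And>a b c::'a. (a + b) * c = a * c + b * c"
    and one_l: "\<And>a::'a. 1 * a = a"
    and one_r: "\<And>a::'a. a * 1 = a"
    and \<sigma>_add: "\<And>a b. \<sigma> (a + b) = \<sigma> a + \<sigma> b"
    and \<sigma>_surj: "surj \<sigma>"
    and \<sigma>_one: "\<sigma> 1 = 1"
    and \<delta>_add: "\<And>a b. \<delta> (a + b) = \<delta> a + \<delta> b"
    and \<delta>_one: "\<delta> 1 = 0"
  shows "set_sum_upto (XpowR \<sigma> \<delta>) n = set_sum_upto RXpow n"
proof -
  have s0: "\<sigma> 0 = 0" using \<sigma>_add[of 0 0] by simp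
  have d0: "\<delta> 0 = 0" using \<delta>_add[of 0 0] by simp
  have xr: "ore_mult \<sigma> \<delta> (monom 1 i) (monom r 0) = (\<lambda>k. ore_pi \<sigma> \<delta> i k r)" for i r
  proof (cases "(1::'a) = 0")
    case True
    have z: "a = 0" for a :: 'a
    proof -
      have "(0::'a) * a = (0 + 0) * a" by simp
      then have "(0::'a) * a = 0" using distr[of 0 0 a] by simp
      then show ?thesis using one_l[of a] True by simp
    qed
    show ?thesis by (rule ext) (metis z)
  next
    case False
    have m1: "{m. monom (1::'a) i m \<noteq> 0} = {i}" using False by (auto simp: monom_def)
    show ?thesis
    proof (cases "r = 0")
      case True
      have "{n. monom r 0 n \<noteq> 0} = {}" using True by (auto simp: monom_def)
      then show ?thesis unfolding ore_mult_def using True pi_zero[of \<sigma> \<delta>, OF s0 d0] by simp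
    next
      case False
      have "{n. monom r 0 n \<noteq> 0} = {0}" using False by (auto simp: monom_def)
      then show ?thesis unfolding ore_mult_def using m1 one_l by (simp add: monom_def)
    qed
  qed
  have XR: "XpowR \<sigma> \<delta> i = {(\<lambda>k. ore_pi \<sigma> \<delta> i k r) | r. True}" for i
    unfolding XpowR_def xr ..
  have A: "set_sum_upto (RXpow :: nat \<Rightarrow> (nat \<Rightarrow> 'a) set) n = {f. \<forall>k>n. f k = 0}"
  proof (intro equalityI subsetI)
    fix f assume "f \<in> set_sum_upto RXpow n"
    then obtain g where g: "\<forall>i\<le>n. g i \<in> RXpow i" and f: "f = (\<lambda>k. \<Sum>i\<le>n. g i k)"
      unfolding set_sum_upto_def by auto
    have "g i k = 0" if "i \<le> n" "n < k" for i k
      using g that unfolding RXpow_def monom_def by auto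
    then show "f \<in> {f. \<forall>k>n. f k = 0}" using f by simp
  next
    fix f :: "nat \<Rightarrow> 'a" assume "f \<in> {f. \<forall>k>n. f k = 0}"
    then have f: "\<forall>k>n. f k = 0" by simp
    have F1: "f = (\<lambda>k. \<Sum>i\<le>n. monom (f i) i k)"
    proof
      fix k
      have "(\<Sum>i\<le>n. monom (f i) i k) = (\<Sum>i\<le>n. if k = i then f k else 0)"
        by (rule sum.cong) (auto simp: monom_def)
      also have "\<dots> = (if k \<le> n then f k else 0)" by simp
      finally show "f k = (\<Sum>i\<le>n. monom (f i) i k)" using f by auto
    qed
    have F2: "\<forall>i\<le>n. monom (f i) i \<in> RXpow i" unfolding RXpow_def by auto
    have "\<exists>g. f = (\<lambda>k. \<Sum>i\<le>n. g i k) \<and> (\<forall>i\<le>n. g i \<in> RXpow i)"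
      by (rule exI[of _ "\<lambda>i. monom (f i) i"]) (rule conjI[OF F1 F2])
    then show "f \<in> set_sum_upto RXpow n" unfolding set_sum_upto_def by simp
  qed
  have B1: "set_sum_upto (XpowR \<sigma> \<delta>) n \<subseteq> {f. \<forall>k>n. f k = 0}"
  proof
    fix f assume "f \<in> set_sum_upto (XpowR \<sigma> \<delta>) n"
    then obtain g where g: "\<forall>i\<le>n. g i \<in> XpowR \<sigma> \<delta> i" and f: "f = (\<lambda>k. \<Sum>i\<le>n. g i k)"
      unfolding set_sum_upto_def by auto
    have "g i k = 0" if ik: "i \<le> n" "n < k" for i k
    proof -
      obtain r where "g i = (\<lambda>k. ore_pi \<sigma> \<delta> i k r)" using g ik unfolding XR by auto
      then show ?thesis using pi_big[of i k] ik by simp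
    qed
    then show "f \<in> {f. \<forall>k>n. f k = 0}" using f by simp
  qed
  have B2: "\<forall>k>n. f k = 0 \<Longrightarrow> f \<in> set_sum_upto (XpowR \<sigma> \<delta>) n" for f
  proof (induction n arbitrary: f)
    case 0
    define r where "r = f 0"
    have r: "f 0 = (\<sigma> ^^ 0) r" by (simp add: r_def)
    have H1: "f = (\<lambda>k. \<Sum>i\<le>0. (\<lambda>i k. ore_pi \<sigma> \<delta> i k r) i k)"
    proof
      fix k show "f k = (\<Sum>i\<le>0. (\<lambda>i k. ore_pi \<sigma> \<delta> i k r) i k)"
      proof (cases k)
        case 0
        then show ?thesis using r pi_top[of \<sigma> \<delta> 0 r] by simp
      next
        case (Suc j)
        then have "f k = 0" using "0.prems" by simp
        moreover have "ore_pi \<sigma> \<delta> 0 k r = 0" using pi_big[of 0 k] Suc by simp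
        ultimately show ?thesis by simp
      qed
    qed
    have H2: "\<forall>i\<le>0. (\<lambda>i k. ore_pi \<sigma> \<delta> i k r) i \<in> XpowR \<sigma> \<delta> i" unfolding XR by auto
    have "\<exists>g. f = (\<lambda>k. \<Sum>i\<le>0. g i k) \<and> (\<forall>i\<le>0. g i \<in> XpowR \<sigma> \<delta> i)"
      by (rule exI, rule conjI[OF H1 H2])
    then show ?case unfolding set_sum_upto_def mem_Collect_eq .
  next
    case (Suc n)
    have "surj (\<sigma> ^^ Suc n)" by (rule surj_fn[OF \<sigma>_surj])
    then obtain r where r: "f (Suc n) = (\<sigma> ^^ Suc n) r" by (metis surjD)
    define f' where "f' = (\<lambda>k. f k - ore_pi \<sigma> \<delta> (Suc n) k r)"
    have "\<forall>k>n. f' k = 0"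
    proof (intro allI impI)
      fix k assume "n < k"
      then consider "k = Suc n" | "Suc n < k" by linarith
      then show "f' k = 0"
      proof cases
        case 1
        then show ?thesis using r pi_top[of \<sigma> \<delta> "Suc n" r] unfolding f'_def by simp
      next
        case 2
        then have "f k = 0" using Suc.prems by simp
        moreover have "ore_pi \<sigma> \<delta> (Suc n) k r = 0" using pi_big[of "Suc n" k] 2 by simp
        ultimately show ?thesis unfolding f'_def by simp
      qed
    qed
    from Suc.IH[OF this] obtain g where g: "\<forall>i\<le>n. g i \<in> XpowR \<sigma> \<delta> i"
      and f': "f' = (\<lambda>k. \<Sum>i\<le>n. g i k)"
      unfolding set_sum_upto_def by auto
    define g' where "g' = g(Suc n := (\<lambda>k. ore_pi \<sigma> \<delta> (Suc n) k r))"
    have H2: "\<forall>i\<le>Suc n. g' i \<in> XpowR \<sigma> \<delta> i"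
      using g unfolding g'_def XR by (auto simp: le_Suc_eq)
    have H1: "f = (\<lambda>k. \<Sum>i\<le>Suc n. g' i k)"
    proof
      fix k
      have "(\<Sum>i\<le>Suc n. g' i k) = (\<Sum>i\<le>n. g' i k) + ore_pi \<sigma> \<delta> (Suc n) k r"
        by (simp add: g'_def)
      also have "(\<Sum>i\<le>n. g' i k) = (\<Sum>i\<le>n. g i k)"
        by (rule sum.cong) (auto simp: g'_def)
      also have "\<dots> = f' k" using f' by simp
      finally show "f k = (\<Sum>i\<le>Suc n. g' i k)" by (simp add: f'_def)
    qed
    have "\<exists>g. f = (\<lambda>k. \<Sum>i\<le>Suc n. g i k) \<and> (\<forall>i\<le>Suc n. g i \<in> XpowR \<sigma> \<delta> i)"
      by (rule exI, rule conjI[OF H1 H2])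
    then show ?case unfolding set_sum_upto_def mem_Collect_eq .
  qed
  show ?thesis unfolding A using B1 B2 by blast
qed

end
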